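(* Let $\mathcal X,\mathcal U$ be finite nonempty sets, $f:\mathcal X\times\mathcal U\to\mathcal X$ and $\ell_1,\ell_2:\mathcal X\to\mathbb R$, and let $$v_{\mathrm{RR}}^*(x)=\max_{\mathbf u\in\mathbb U}\min\Big\{\max_{\tau\in\mathbb N}\ell_1(\xi_x^{\mathbf u}(\tau)),\max_{\tau\in\mathbb N}\ell_2(\xi_x^{\mathbf u}(\tau))\Big\}.$$ Then there is an augmented policy $\bar\pi\in\overline\Pi$ such that for all $x\in\mathcal X$, $$v_{\mathrm{RR}}^*(x)=\min\Big\{\max_{\tau\in\mathbb N}\ell_1(\bar\xi_x^{\bar\pi}(\tau)),\max_{\tau\in\mathbb N}\ell_2(\bar\xi_x^{\bar\pi}(\tau))\Big\}.$$
   Context: $\mathbb N=\{0,1,\dots\}$; $\mathbb U$ is the set of sequences $\mathbb N\to\mathcal U$; for $\mathbf u\in\mathbb U$: $\xi_x^{\mathbf u}(0)=x$, $\xi_x^{\mathbf u}(t+1)=f(\xi_x^{\mathbf u}(t),\mathbf u(t))$. Let $\mathcal Y=\{\ell_1(x):x\in\mathcal X\}$, $\mathcal Z=\{\ell_2(x):x\in\mathcal X\}$ and $\overline\Pi$ the set of maps $\bar\pi:\mathcal X\times\mathcal Y\times\mathcal Z\to\mathcal U$. For $\bar\pi\in\overline\Pi$: $\bar\xi_x^{\bar\pi}(0)=x$, $\bar y_x^{\bar\pi}(0)=\ell_1(x)$, $\bar z_x^{\bar\pi}(0)=\ell_2(x)$, $\bar\xi_x^{\bar\pi}(t+1)=f\big(\bar\xi_x^{\bar\pi}(t),\bar\pi(\bar\xi_x^{\bar\pi}(t),\bar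 y_x^{\bar\pi}(t),\bar z_x^{\bar\pi}(t))\big)$, $\bar y_x^{\bar\pi}(t+1)=\max\{\ell_1(\bar\xi_x^{\bar\pi}(t+1)),\bar y_x^{\bar\pi}(t)\}$, $\bar z_x^{\bar\pi}(t+1)=\max\{\ell_2(\bar\xi_x^{\bar\pi}(t+1)),\bar z_x^{\bar\pi}(t)\}$. *)

theory Defs
  imports Main "HOL.Real"
begin

primrec traj :: "('x \<Rightarrow> 'u \<Rightarrow> 'x) \<Rightarrow> 'x \<Rightarrow> (nat \<Rightarrow> 'u) \<Rightarrow> nat \<Rightarrow> 'x" where
  "traj f x u 0 = x"
| "traj f x u (Suc t) = f (traj f x u t) (u t)"

primrec aug_traj :: "('x \<Rightarrow> 'u \<Rightarrow> 'x) \<Rightarrow> ('x \<Rightarrow> real) \<Rightarrow> ('x \<Rightarrow> real)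
    \<Rightarrow> ('x \<Rightarrow> real \<Rightarrow> real \<Rightarrow> 'u) \<Rightarrow> 'x \<Rightarrow> nat \<Rightarrow> 'x \<times> real \<times> real" where
  "aug_traj f l1 l2 pi x 0 = (x, l1 x, l2 x)"
| "aug_traj f l1 l2 pi x (Suc t) =
     (let (s, y, z) = aug_traj f l1 l2 pi x t;
          s' = f s (pi s y z)
      in (s', max (l1 s') y, max (l2 s') z))"

definition aug_state :: "('x \<Rightarrow> 'u \<Rightarrow> 'x) \<Rightarrow> ('x \<Rightarrow> real) \<Rightarrow> ('x \<Rightarrow> real)
    \<Rightarrow> ('x \<Rightarrow> real \<Rightarrow> real \<Rightarrow> 'u) \<Rightarrow> 'x \<Rightarrow> nat \<Rightarrow> 'x" where
  "aug_state f l1 l2 pi x t = fst (aug_traj f l1 l2 pi x t)"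

text \<open>Optimal reach-reach value: max over input sequences of the min of the two
  maxima over time. All maxima are over finite value sets since 'x is finite.\<close>
definition v_RR :: "('x \<Rightarrow> 'u \<Rightarrow> 'x) \<Rightarrow> ('x \<Rightarrow> real) \<Rightarrow> ('x \<Rightarrow> real) \<Rightarrow> 'x \<Rightarrow> real" where
  "v_RR f l1 l2 x = Max ((\<lambda>u. min (Max (range (\<lambda>\<tau>. l1 (traj f x u \<tau>))))
                                     (Max (range (\<lambda>\<tau>. l2 (traj f x u \<tau>))))) ` UNIV)"

end

theory Submission
  imports Defs
begin

definition step :: "('x \<Rightarrow> 'u \<Rightarrow> 'x) \<Rightarrow> ('x \<Rightarrow> real) \<Rightarrow> ('x \<Rightarrow> real) \<Rightarrow> 'x \<times> real \<times> real \<Rightarrow> 'u \<Rightarrow> 'x \<times> real \<times> real" where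
"step f l1 l2 s a = (f (fst s) a, max (l1 (f (fst s) a)) (fst (snd s)), max (l2 (f (fst s) a)) (snd (snd s)))"

primrec otraj where
  "otraj f l1 l2 s u 0 = s"
| "otraj f l1 l2 s u (Suc t) = step f l1 l2 (otraj f l1 l2 s u t) (u t)"

primrec cl where
  "cl f l1 l2 P s 0 = s"
| "cl f l1 l2 P s (Suc t) = step f l1 l2 (cl f l1 l2 P s t) (P (cl f l1 l2 P s t))"

definition g :: "'x \<times> real \<times> real \<Rightarrow> real" where "g s = min (fst (snd s)) (snd (snd s))"

lemma otraj_shift: "otraj f l1 l2 s u (Suc t) = otraj f l1 l2 (step f l1 l2 s (u 0)) (\<lambda>k. u (Suc k)) t"
  by (induction t) auto

lemma cl_shift: "cl f l1 l2 P s (Suc t) = cl f l1 l2 P (step f l1 l2 s (P s)) t"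
  by (induction t) auto

lemma cl_otraj: "cl f l1 l2 P s t = otraj f l1 l2 s (\<lambda>k. P (cl f l1 l2 P s k)) t"
  by (induction t) auto

lemma otraj_vals: "fst (snd (otraj f l1 l2 s u t)) \<in> insert (fst (snd s)) (range l1) \<and>
   snd (snd (otraj f l1 l2 s u t)) \<in> insert (snd (snd s)) (range l2)"
  by (induction t) (auto simp: step_def max_def)

definition V where "V f l1 l2 s = Max {g (otraj f l1 l2 s u t) | u t. True}"

lemma V_fin: "finite {g (otraj f l1 l2 s u t) | u t. True}" for l1 l2 :: "'x::finite \<Rightarrow> real"
proof (rule finite_subset[of _ "insert (fst (snd s)) (range l1) \<union> insert (snd (snd s)) (range l2)"])
  show "{g (otraj f l1 l2 s u t) | u t. True} \<subseteq> insert (fst (snd s)) (range l1) \<union> insert (snd (snd s)) (range l2)"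
  proof
    fix v assume "v \<in> {g (otraj f l1 l2 s u t) | u t. True}"
    then obtain u t where v: "v = g (otraj f l1 l2 s u t)" by blast
    show "v \<in> insert (fst (snd s)) (range l1) \<union> insert (snd (snd s)) (range l2)"
      using otraj_vals[of f l1 l2 s u t] unfolding v g_def min_def by auto
  qed
qed auto

lemma V_ge: "g (otraj f l1 l2 s u t) \<le> V f l1 l2 s" for l1 l2 :: "'x::finite \<Rightarrow> real"
  unfolding V_def by (rule Max_ge[OF V_fin]) blast

lemma V_attained: "\<exists>u t. g (otraj f l1 l2 s u t) = V f l1 l2 s" for l1 l2 :: "'x::finite \<Rightarrow> real"
proof -
  have "V f l1 l2 s \<in> {g (otraj f l1 l2 s u t) | u t. True}"
    unfolding V_def by (rule Max_in[OF V_fin]) blast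
  then obtain u t where "V f l1 l2 s = g (otraj f l1 l2 s u t)" by blast
  then show ?thesis by metis
qed

definition N where "N f l1 l2 s = (LEAST n. \<exists>u. g (otraj f l1 l2 s u n) = V f l1 l2 s)"
definition U where "U f l1 l2 s = (SOME u. g (otraj f l1 l2 s u (N f l1 l2 s)) = V f l1 l2 s)"
definition P where "P f l1 l2 s = U f l1 l2 s 0"

lemma N_prop: "\<exists>u. g (otraj f l1 l2 s u (N f l1 l2 s)) = V f l1 l2 s" for l1 l2 :: "'x::finite \<Rightarrow> real"
  proof -
  obtain u t where "g (otraj f l1 l2 s u t) = V f l1 l2 s" using V_attained by blast
  then have "\<exists>u. g (otraj f l1 l2 s u t) = V f l1 l2 s" by blast
  then show ?thesis unfolding N_def by (rule LeastI)
qed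

lemma U_prop: "g (otraj f l1 l2 s (U f l1 l2 s) (N f l1 l2 s)) = V f l1 l2 s" for l1 l2 :: "'x::finite \<Rightarrow> real"
  unfolding U_def using N_prop[of f l1 l2 s] by (rule someI_ex)

lemma N_le: "g (otraj f l1 l2 s u n) = V f l1 l2 s \<Longrightarrow> N f l1 l2 s \<le> n"
  unfolding N_def by (rule Least_le) blast

lemma main: "\<exists>t. V f l1 l2 s \<le> g (cl f l1 l2 (P f l1 l2) s t)" for l1 l2 :: "'x::finite \<Rightarrow> real"
proof (induction "N f l1 l2 s" arbitrary: s rule: less_induct)
  case less
  show ?case
  proof (cases "N f l1 l2 s")
    case 0
    then have "g (otraj f l1 l2 s (U f l1 l2 s) 0) = V f l1 l2 s" using U_prop[of f l1 l2 s] by simp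
    then show ?thesis by (intro exI[of _ 0]) simp
  next
    case (Suc n)
    define u where "u = U f l1 l2 s"
    define s1 where "s1 = step f l1 l2 s (P f l1 l2 s)"
    have Pu: "P f l1 l2 s = u 0" unfolding P_def u_def ..
    have e: "g (otraj f l1 l2 s1 (\<lambda>k. u (Suc k)) n) = V f l1 l2 s"
      using U_prop[of f l1 l2 s] Suc otraj_shift[of f l1 l2 s u n] unfolding s1_def Pu u_def[symmetric]
      by simp
    hence le1: "V f l1 l2 s \<le> V f l1 l2 s1" by (metis V_ge)
    have le2: "V f l1 l2 s1 \<le> V f l1 l2 s"
    proof -
      obtain u' t' where "g (otraj f l1 l2 s1 u' t') = V f l1 l2 s1" using V_attained by blast
      moreover have "otraj f l1 l2 s1 u' t' = otraj f l1 l2 s (case_nat (P f l1 l2 s) u') (Suc t')"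
        using otraj_shift[of f l1 l2 s "case_nat (P f l1 l2 s) u'" t'] unfolding s1_def by simp
      ultimately show ?thesis by (metis V_ge)
    qed
    have "V f l1 l2 s1 = V f l1 l2 s" using le1 le2 by simp
    with e have "N f l1 l2 s1 \<le> n" using N_le by metis
    hence "N f l1 l2 s1 < N f l1 l2 s" using Suc by simp
    then obtain t where "V f l1 l2 s1 \<le> g (cl f l1 l2 (P f l1 l2) s1 t)" using less by blast
    then show ?thesis using cl_shift[of f l1 l2 "P f l1 l2" s t] \<open>V f l1 l2 s1 = V f l1 l2 s\<close>
      unfolding s1_def by metis
  qed
qed

lemma aug_cl: "aug_traj f l1 l2 pi x t = cl f l1 l2 (\<lambda>s. pi (fst s) (fst (snd s)) (snd (snd s))) (x, l1 x, l2 x) t"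
  by (induction t) (auto simp: step_def Let_def split: prod.splits)

lemma otraj_fst: "fst (otraj f l1 l2 s u t) = traj f (fst s) u t"
  by (induction t) (auto simp: step_def)

lemma otraj_ge: "\<tau> \<le> t \<Longrightarrow> fst s = x \<Longrightarrow> fst (snd s) = l1 x \<Longrightarrow> snd (snd s) = l2 x \<Longrightarrow>
   l1 (traj f x u \<tau>) \<le> fst (snd (otraj f l1 l2 s u t)) \<and> l2 (traj f x u \<tau>) \<le> snd (snd (otraj f l1 l2 s u t))"
proof (induction t)
  case 0 then show ?case by simp
next
  case (Suc t)
  show ?case
  proof (cases "\<tau> = Suc t")
    case True
    then show ?thesis using otraj_fst[of f l1 l2 s u t] Suc.prems by (auto simp: step_def)
  next
    case False
    then have "\<tau> \<le> t" using Suc.prems by simp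
    then show ?thesis using Suc by (auto simp: step_def)
  qed
qed

lemma otraj_in: "fst (snd (otraj f l1 l2 (x, l1 x, l2 x) u t)) \<in> (\<lambda>\<tau>. l1 (traj f x u \<tau>)) ` {..t} \<and>
   snd (snd (otraj f l1 l2 (x, l1 x, l2 x) u t)) \<in> (\<lambda>\<tau>. l2 (traj f x u \<tau>)) ` {..t}"
proof (induction t)
  case 0 then show ?case by force
next
  case (Suc t)
  have f: "fst (otraj f l1 l2 (x, l1 x, l2 x) u t) = traj f x u t" using otraj_fst[of f l1 l2 "(x, l1 x, l2 x)" u t] by simp
  have tS: "traj f x u (Suc t) = f (traj f x u t) (u t)" by simp
  have S: "Suc t \<in> {..Suc t}" by simp
  have sub: "(\<lambda>\<tau>. l (traj f x u \<tau>)) ` {..t} \<subseteq> (\<lambda>\<tau>. l (traj f x u \<tau>)) ` {..Suc t}" for l :: "'a \<Rightarrow> real"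
    by auto
  have "l1 (traj f x u (Suc t)) \<in> (\<lambda>\<tau>. l1 (traj f x u \<tau>)) ` {..Suc t}"
       "l2 (traj f x u (Suc t)) \<in> (\<lambda>\<tau>. l2 (traj f x u \<tau>)) ` {..Suc t}" using S by blast+
  then show ?case using Suc sub[of l1] sub[of l2] f tS unfolding otraj.simps step_def max_def
    by (auto split: if_splits)
qed

theorem mainTheorem16:
  fixes f :: "'x::finite \<Rightarrow> 'u::finite \<Rightarrow> 'x"
    and l1 l2 :: "'x \<Rightarrow> real"
  shows "\<exists>pi :: 'x \<Rightarrow> real \<Rightarrow> real \<Rightarrow> 'u. \<forall>x.
           v_RR f l1 l2 x =
             min (Max (range (\<lambda>\<tau>. l1 (aug_state f l1 l2 pi x \<tau>))))
                 (Max (range (\<lambda>\<tau>. l2 (aug_state f l1 l2 pi x \<tau>))))"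
proof -
  define Q where "Q = P f l1 l2"
  define pi where "pi = (\<lambda>x y z. Q (x, y, z))"
  have piQ: "(\<lambda>s. pi (fst s) (fst (snd s)) (snd (snd s))) = Q" unfolding pi_def by auto
  have "v_RR f l1 l2 x =
             min (Max (range (\<lambda>\<tau>. l1 (aug_state f l1 l2 pi x \<tau>))))
                 (Max (range (\<lambda>\<tau>. l2 (aug_state f l1 l2 pi x \<tau>))))" for x
  proof -
    define s0 where "s0 = (x, l1 x, l2 x)"
    define u' where "u' = (\<lambda>k. Q (cl f l1 l2 Q s0 k))"
    have clo: "cl f l1 l2 Q s0 t = otraj f l1 l2 s0 u' t" for t unfolding u'_def by (rule cl_otraj)
    have st: "aug_state f l1 l2 pi x t = traj f x u' t" for t
      unfolding aug_state_def aug_cl piQ using clo[of t] otraj_fst[of f l1 l2 s0 u' t] by (simp add: s0_def)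
    define J where "J u = min (Max (range (\<lambda>\<tau>. l1 (traj f x u \<tau>)))) (Max (range (\<lambda>\<tau>. l2 (traj f x u \<tau>))))" for u
    have fin1: "finite (range (\<lambda>\<tau>. l1 (traj f x u \<tau>)))" for u
      by (rule finite_subset[of _ "range l1"]) auto
    have fin2: "finite (range (\<lambda>\<tau>. l2 (traj f x u \<tau>)))" for u
      by (rule finite_subset[of _ "range l2"]) auto
    have in1: "Max (range (\<lambda>\<tau>. l1 (traj f x u \<tau>))) \<in> range (\<lambda>\<tau>. l1 (traj f x u \<tau>))" for u
      using fin1 by (rule Max_in) auto
    have in2: "Max (range (\<lambda>\<tau>. l2 (traj f x u \<tau>))) \<in> range (\<lambda>\<tau>. l2 (traj f x u \<tau>))" for u
      using fin2 by (rule Max_in) auto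
    have finJ: "finite (range J)"
    proof (rule finite_subset[of _ "range l1 \<union> range l2"])
      show "range J \<subseteq> range l1 \<union> range l2"
      proof
        fix v assume "v \<in> range J"
        then obtain u where v: "v = J u" by auto
        show "v \<in> range l1 \<union> range l2" using in1[of u] in2[of u] unfolding v J_def min_def by auto
      qed
    qed auto
    have vJ: "v_RR f l1 l2 x = Max (range J)" unfolding v_RR_def J_def ..
    have A: "J u' \<le> v_RR f l1 l2 x" unfolding vJ using finJ by (rule Max_ge) auto
    have "Max (range J) \<in> range J" using finJ by (rule Max_in) auto
    then obtain u where u: "v_RR f l1 l2 x = J u" unfolding vJ by auto
    obtain t1 where t1: "Max (range (\<lambda>\<tau>. l1 (traj f x u \<tau>))) = l1 (traj f x u t1)" using in1[of u] by auto
    obtain t2 where t2: "Max (range (\<lambda>\<tau>. l2 (traj f x u \<tau>))) = l2 (traj f x u t2)" using in2[of u] by auto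
    have "J u \<le> g (otraj f l1 l2 s0 u (max t1 t2))"
      using otraj_ge[of t1 "max t1 t2" s0 x l1 l2 f u] otraj_ge[of t2 "max t1 t2" s0 x l1 l2 f u]
      unfolding J_def t1 t2 g_def s0_def by auto
    also have "\<dots> \<le> V f l1 l2 s0" by (rule V_ge)
    also obtain t where "V f l1 l2 s0 \<le> g (cl f l1 l2 Q s0 t)" using main unfolding Q_def by blast
    also have "g (cl f l1 l2 Q s0 t) \<le> J u'"
    proof -
      obtain a where a: "a \<le> t" "fst (snd (otraj f l1 l2 s0 u' t)) = l1 (traj f x u' a)"
        using conjunct1[OF otraj_in[of f l1 l2 x u' t]] unfolding s0_def by auto
      obtain b where b: "b \<le> t" "snd (snd (otraj f l1 l2 s0 u' t)) = l2 (traj f x u' b)"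
        using conjunct2[OF otraj_in[of f l1 l2 x u' t]] unfolding s0_def by auto
      have "l1 (traj f x u' a) \<le> Max (range (\<lambda>\<tau>. l1 (traj f x u' \<tau>)))" using fin1 by (rule Max_ge) auto
      moreover have "l2 (traj f x u' b) \<le> Max (range (\<lambda>\<tau>. l2 (traj f x u' \<tau>)))" using fin2 by (rule Max_ge) auto
      ultimately show ?thesis unfolding clo g_def J_def a b by auto
    qed
    finally have B: "v_RR f l1 l2 x \<le> J u'" using u by simp
    show ?thesis using A B unfolding st J_def by simp
  qed
  then show ?thesis by blast
qed

end
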